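(* Let $K$ be a field of characteristic $p>0$, let $a\in K^{{\mathbb N}}$ be a simple nondegenerate $K$-recurrence sequence, let $q$ be a power of $p$, and let $r,s\in{\mathbb Q}$. If $\{r+sq^n\mid n\ge m\}\subseteq{\mathcal Z}(a)$ for some $m\in{\mathbb N}$, then $\{r+sq^n\mid n\in{\mathbb N}\}\cap{\mathbb N}\subseteq{\mathcal Z}(a)$.
   Context: ${\mathbb N}=\{0,1,2,\dots\}$, ${\mathcal Z}(a)=\{n\in{\mathbb N}\mid a(n)=0\}$. The minimum polynomial $P_a$ is the monic generator of $\{P\in K[E]\mid P(E)a=0\}$, $(Ea)(n)=a(n+1)$. $a$ is simple if $P_a$ has distinct roots and nondegenerate if its roots are nonzero and no quotient of two distinct roots is a root of unity. *)

theory Defs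
  imports "HOL-Algebra.Algebraic_Closure_Type"
begin

definition zero_set :: "(nat \<Rightarrow> 'a::zero) \<Rightarrow> nat set" where
  "zero_set a = {n. a n = 0}"

text \<open>Application of the polynomial P(E) in the shift operator (E a)(n) = a(n+1).\<close>
definition shift_apply :: "'a::comm_ring_1 poly \<Rightarrow> (nat \<Rightarrow> 'a) \<Rightarrow> nat \<Rightarrow> 'a" where
  "shift_apply P a = (\<lambda>n. \<Sum>i\<le>degree P. coeff P i * a (n + i))"

definition annihilates :: "'a::comm_ring_1 poly \<Rightarrow> (nat \<Rightarrow> 'a) \<Rightarrow> bool" where
  "annihilates P a \<longleftrightarrow> shift_apply P a = (\<lambda>_. 0)"

definition is_recurrence :: "(nat \<Rightarrow> 'a::field) \<Rightarrow> bool" where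
  "is_recurrence a \<longleftrightarrow> (\<exists>P. P \<noteq> 0 \<and> annihilates P a)"

definition min_poly :: "(nat \<Rightarrow> 'a::field) \<Rightarrow> 'a poly" where
  "min_poly a = (THE P. lead_coeff P = 1 \<and> (\<forall>Q. annihilates Q a \<longleftrightarrow> P dvd Q))"

definition simple_rec :: "(nat \<Rightarrow> 'a::field) \<Rightarrow> bool" where
  "simple_rec a \<longleftrightarrow> rsquarefree (map_poly to_ac (min_poly a))"

definition nondegenerate_rec :: "(nat \<Rightarrow> 'a::field) \<Rightarrow> bool" where
  "nondegenerate_rec a \<longleftrightarrow>
     (\<forall>x. poly (map_poly to_ac (min_poly a)) x = 0 \<longrightarrow> x \<noteq> 0) \<and>
     (\<forall>x y. poly (map_poly to_ac (min_poly a)) x = 0 \<longrightarrow>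
            poly (map_poly to_ac (min_poly a)) y = 0 \<longrightarrow> x \<noteq> y \<longrightarrow>
            \<not> (\<exists>k::nat. k > 0 \<and> (x / y) ^ k = 1))"

end

theory Submission
  imports Defs
begin

fun ee :: "nat \<Rightarrow> nat \<Rightarrow> nat" where
  "ee q 0 = 0" | "ee q (Suc i) = q * ee q i + 1"

lemma frob_core:
  fixes h \<beta> :: "'b \<Rightarrow> 'c::alg_closed_field"
  assumes pc: "prime CHAR('c)" and qd: "q = CHAR('c) ^ k"
    and fin: "finite S" and nz: "\<forall>x\<in>S. \<beta> x \<noteq> 0"
    and hyp: "\<forall>i\<ge>1. (\<Sum>x\<in>S. h x * \<beta> x ^ ee q i) = 0"
  shows "(\<Sum>x\<in>S. h x) = 0"
  using fin nz hyp
proof (induction S arbitrary: h rule: finite_induct)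
  case empty
  then show ?case by simp
next
  case (insert x S)
  have qpos: "q > 0" using qd pc by (simp add: prime_gt_0_nat)
  show ?case
  proof (cases "h x = 0")
    case True
    then show ?thesis using insert by simp
  next
    case False
    have "\<forall>y. \<exists>z. z ^ q = h y * \<beta> y" using nth_root_exists qpos by blast
    then obtain \<rho> where \<rho>: "\<And>y. \<rho> y ^ q = h y * \<beta> y" by metis
    have "\<rho> x \<noteq> 0" using \<rho>[of x] False insert.prems qpos by (metis mult_eq_0_iff insertI1 power_0_left neq0_conv)
    define \<mu> where "\<mu> = h x / \<rho> x"
    define g where "g y = \<mu> * \<rho> y" for y
    have gx: "g x = h x" using \<open>\<rho> x \<noteq> 0\<close> by (simp add: g_def \<mu>_def)
    have A: "(\<Sum>y\<in>insert x S. g y * \<beta> y ^ ee q i) = 0" for i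
    proof -
      have "(\<Sum>y\<in>insert x S. g y * \<beta> y ^ ee q i) ^ q = (\<Sum>y\<in>insert x S. (g y * \<beta> y ^ ee q i) ^ q)"
        by (rule freshmans_dream_sum'[OF pc qd])
      also have "\<dots> = (\<Sum>y\<in>insert x S. \<mu> ^ q * (h y * \<beta> y ^ ee q (Suc i)))"
        by (intro sum.cong refl) (simp add: g_def power_mult_distrib \<rho> power_mult[symmetric] mult_ac)
      also have "\<dots> = \<mu> ^ q * (\<Sum>y\<in>insert x S. h y * \<beta> y ^ ee q (Suc i))"
        by (simp add: sum_distrib_left)
      also have "\<dots> = 0"
      proof -
        have "(\<Sum>y\<in>insert x S. h y * \<beta> y ^ ee q (Suc i)) = 0"
          using insert.prems(2) by (metis le_add1 plus_1_eq_Suc)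
        then show ?thesis by simp
      qed
      finally show ?thesis using qpos by simp
    qed
    define \<delta> where "\<delta> y = h y - g y" for y
    have "(\<Sum>y\<in>S. \<delta> y * \<beta> y ^ ee q i) = 0" if "i \<ge> 1" for i
    proof -
      have "(\<Sum>y\<in>S. \<delta> y * \<beta> y ^ ee q i) = (\<Sum>y\<in>insert x S. \<delta> y * \<beta> y ^ ee q i)"
        using insert.hyps gx by (simp add: \<delta>_def)
      also have "\<dots> = (\<Sum>y\<in>insert x S. h y * \<beta> y ^ ee q i) - (\<Sum>y\<in>insert x S. g y * \<beta> y ^ ee q i)"
        by (simp add: \<delta>_def sum_subtractf algebra_simps)
      also have "\<dots> = 0" using A insert.prems(2) that by simp
      finally show ?thesis .
    qed
    then have "(\<Sum>y\<in>S. \<delta> y) = 0" using insert.IH[of \<delta>] insert.prems(1) by auto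
    then have "(\<Sum>y\<in>S. h y) = (\<Sum>y\<in>S. g y)" by (simp add: \<delta>_def sum_subtractf)
    then have "(\<Sum>y\<in>insert x S. h y) = (\<Sum>y\<in>insert x S. g y * \<beta> y ^ ee q 0)"
      using insert.hyps gx by simp
    then show ?thesis using A[of 0] by simp
  qed
qed

lemma shift_apply_big:
  fixes P :: "'a::comm_ring_1 poly"
  assumes "degree P < D"
  shows "shift_apply P a n = (\<Sum>i<D. coeff P i * a (n + i))"
  unfolding shift_apply_def
  by (rule sum.mono_neutral_left) (use assms in \<open>auto simp: coeff_eq_0\<close>)

lemma shift_apply_add:
  fixes P Q :: "'a::comm_ring_1 poly"
  shows "shift_apply (P + Q) a n = shift_apply P a n + shift_apply Q a n"
proof -
  let ?D = "Suc (degree P + degree Q)"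
  have "degree (P + Q) < ?D" using degree_add_le_max[of P Q] by linarith
  then show ?thesis
    by (simp add: shift_apply_big[of _ ?D] sum.distrib algebra_simps del: sum.lessThan_Suc)
qed

lemma shift_apply_smult:
  fixes P :: "'a::comm_ring_1 poly"
  shows "shift_apply (smult c P) a n = c * shift_apply P a n"
proof -
  let ?D = "Suc (degree P)"
  have "degree (smult c P) < ?D" using degree_smult_le[of c P] by linarith
  then show ?thesis
    by (simp add: shift_apply_big[of _ ?D] sum_distrib_left mult_ac del: sum.lessThan_Suc)
qed

lemma shift_apply_diff:
  fixes P Q :: "'a::comm_ring_1 poly"
  shows "shift_apply (P - Q) a n = shift_apply P a n - shift_apply Q a n"
proof -
  let ?D = "Suc (degree P + degree Q)"
  have "degree (P - Q) < ?D" using degree_diff_le_max[of P Q] by linarith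
  then show ?thesis
    by (simp add: shift_apply_big[of _ ?D] sum_subtractf algebra_simps del: sum.lessThan_Suc)
qed

lemma shift_apply_zero [simp]: "shift_apply (0::'a::comm_ring_1 poly) a n = 0"
  by (simp add: shift_apply_def)

lemma shift_apply_sum:
  fixes f :: "'b \<Rightarrow> 'a::comm_ring_1 poly"
  shows "finite S \<Longrightarrow> shift_apply (\<Sum>x\<in>S. f x) a n = (\<Sum>x\<in>S. shift_apply (f x) a n)"
  by (induction S rule: finite_induct) (auto simp: shift_apply_add)

lemma shift_apply_pCons0:
  fixes P :: "'a::comm_ring_1 poly"
  shows "shift_apply (pCons 0 P) a n = shift_apply P a (Suc n)"
proof -
  let ?D = "Suc (Suc (degree P))"
  have "degree (pCons 0 P) < ?D" using degree_pCons_le[of 0 P] by linarith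
  then have "shift_apply (pCons 0 P) a n = (\<Sum>i<?D. coeff (pCons 0 P) i * a (n + i))"
    by (rule shift_apply_big)
  also have "\<dots> = (\<Sum>i<Suc (degree P). coeff P i * a (Suc n + i))"
    by (subst sum.lessThan_Suc_shift) simp
  also have "\<dots> = shift_apply P a (Suc n)"
    by (rule shift_apply_big[symmetric]) simp
  finally show ?thesis .
qed

lemma shift_apply_monom:
  fixes c :: "'a::comm_ring_1"
  shows "shift_apply (monom c N) a n = c * a (n + N)"
proof -
  have "degree (monom c N) < Suc N" using degree_monom_le[of c N] by linarith
  then have "shift_apply (monom c N) a n = (\<Sum>i<Suc N. coeff (monom c N) i * a (n + i))"
    by (rule shift_apply_big)
  also have "\<dots> = c * a (n + N)"
    by (simp add: coeff_monom if_distrib cong: if_cong)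
  finally show ?thesis .
qed

lemma shift_apply_mult:
  fixes P Q :: "'a::comm_ring_1 poly"
  assumes "annihilates P a"
  shows "shift_apply (Q * P) a n = 0"
proof (induction Q arbitrary: n)
  case (pCons c Q)
  have "shift_apply P a n = 0" using assms by (simp add: annihilates_def fun_eq_iff)
  then show ?case
    by (simp add: shift_apply_add shift_apply_smult shift_apply_pCons0 pCons.IH)
qed simp

lemma annihilates_mult:
  fixes P Q :: "'a::comm_ring_1 poly"
  shows "annihilates P a \<Longrightarrow> annihilates (Q * P) a"
  using shift_apply_mult unfolding annihilates_def by blast

lemma annihilates_mod:
  fixes P Q :: "'a::field poly"
  assumes "annihilates P a" "annihilates Q a"
  shows "annihilates (Q mod P) a"
proof -
  have "Q mod P = Q - (Q div P) * P" by (metis div_mult_mod_eq add_diff_cancel_left')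
  then show ?thesis using assms shift_apply_mult[OF assms(1)]
    by (simp add: annihilates_def shift_apply_diff fun_eq_iff)
qed

lemma monic_dvd_antisym:
  fixes P P' :: "'a::field poly"
  assumes nn: "lead_coeff P = 1" "lead_coeff P' = 1" "P dvd P'" "P' dvd P"
  shows "P = P'"
  proof -
    obtain u where u: "P' = P * u" using nn(3) unfolding dvd_def by blast
    obtain v where v: "P = P' * v" using nn(4) unfolding dvd_def by blast
    have "P \<noteq> 0" using nn(1) by auto
    have "P = (P * u) * v" using v unfolding u .
    then have "P * (u * v) = P * 1" by (simp only: mult.assoc mult_1_right)
    then have uv: "u * v = 1" using \<open>P \<noteq> 0\<close> by (simp only: mult_cancel_left) simp
    then have "u \<noteq> 0" "v \<noteq> 0" by auto
    then have "degree u = 0" using uv degree_mult_eq[of u v] by simp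
    have "lead_coeff u = 1" using nn(1,2) u by (simp add: lead_coeff_mult)
    then have "u = 1" using degree_0_id[OF \<open>degree u = 0\<close>] \<open>degree u = 0\<close> by (simp add: one_pCons)
    then show ?thesis using u by simp
  qed

lemma min_poly_props:
  fixes a :: "nat \<Rightarrow> 'a::field"
  assumes "is_recurrence a"
  shows "lead_coeff (min_poly a) = 1" "annihilates (min_poly a) a"
proof -
  define d where "d = (LEAST d. \<exists>P. P \<noteq> 0 \<and> annihilates P a \<and> degree P = d)"
  have ex: "\<exists>d P. P \<noteq> 0 \<and> annihilates P a \<and> degree P = d" using assms unfolding is_recurrence_def by blast
  obtain P0 where P0: "P0 \<noteq> 0" "annihilates P0 a" "degree P0 = d"
    using LeastI_ex[OF ex] unfolding d_def by blast
  have minl: "degree P \<ge> d" if "P \<noteq> 0" "annihilates P a" for P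
    unfolding d_def by (rule Least_le) (use that in blast)
  define P1 where "P1 = smult (inverse (lead_coeff P0)) P0"
  have P1: "lead_coeff P1 = 1" "annihilates P1 a" "degree P1 = d"
    using P0 by (auto simp: P1_def annihilates_def shift_apply_smult fun_eq_iff)
  have prp: "annihilates Q a \<longleftrightarrow> P1 dvd Q" for Q
  proof
    assume "annihilates Q a"
    then have m: "annihilates (Q mod P1) a" using annihilates_mod P1 by blast
    have "P1 \<noteq> 0" using P1 by auto
    show "P1 dvd Q"
    proof (rule ccontr)
      assume "\<not> P1 dvd Q"
      then have "Q mod P1 \<noteq> 0" by (simp add: mod_eq_0_iff_dvd)
      then have "degree (Q mod P1) < d" using degree_mod_less'[OF \<open>P1 \<noteq> 0\<close>] P1 by simp
      with minl[OF \<open>Q mod P1 \<noteq> 0\<close> m] show False by simp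
    qed
  next
    assume "P1 dvd Q"
    then obtain R where "Q = P1 * R" unfolding dvd_def by blast
    then show "annihilates Q a" using annihilates_mult[OF P1(2), of R] by (simp add: mult.commute)
  qed
  have theq: "min_poly a = P1"
    unfolding min_poly_def
  proof (rule the_equality)
    show "lead_coeff P1 = 1 \<and> (\<forall>Q. annihilates Q a = (P1 dvd Q))" using P1(1) prp by simp
  next
    fix P assume P: "lead_coeff P = 1 \<and> (\<forall>Q. annihilates Q a = (P dvd Q))"
    have d1: "P dvd P1" using P P1(2) by simp
    have d2: "P1 dvd P" using P prp by simp
    have l1: "lead_coeff P = 1" using P by simp
    show "P = P1" by (rule monic_dvd_antisym[OF l1 P1(1) d1 d2])
  qed
  show "lead_coeff (min_poly a) = 1" "annihilates (min_poly a) a" using theq P1 by auto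
qed

lemma sqf_dvd:
  fixes p Q :: "'c::alg_closed_field poly"
  assumes "p \<noteq> 0" "\<forall>x. order x p \<le> 1" "\<forall>x. poly p x = 0 \<longrightarrow> poly Q x = 0"
  shows "p dvd Q"
  using assms
proof (induction "degree p" arbitrary: p Q rule: less_induct)
  case less
  show ?case
  proof (cases "degree p = 0")
    case True
    then have "is_unit p" using less.prems(1) is_unit_iff_degree by blast
    then show ?thesis by (rule unit_imp_dvd)
  next
    case False
    then obtain x where x: "poly p x = 0" using alg_closed_imp_poly_has_root by blast
    then obtain p' where p': "p = [:-x,1:] * p'" using poly_eq_0_iff_dvd unfolding dvd_def by blast
    have "poly Q x = 0" using less.prems(3) x by blast
    then obtain Q' where Q': "Q = [:-x,1:] * Q'" using poly_eq_0_iff_dvd unfolding dvd_def by blast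
    have "p' \<noteq> 0" using less.prems(1) p' by auto
    have "degree ([:-x,1:] * p') = degree [:-x,1:] + degree p'"
      by (rule degree_mult_eq) (use \<open>p' \<noteq> 0\<close> in auto)
    then have deg: "degree p' < degree p" using p' by simp
    have ord: "order y p = order y [:-x,1:] + order y p'" for y
      using order_mult[of "[:-x,1:]" p' y] less.prems(1) p' by simp
    have "order x [:-x,1:] = 1" using order_power_n_n[of x 1] by simp
    then have "order x p' = 0" using less.prems(2)[rule_format, of x] ord[of x] by simp
    then have px: "poly p' x \<noteq> 0" using order_root \<open>p' \<noteq> 0\<close> by blast
    have o2: "\<forall>y. order y p' \<le> 1"
    proof
      fix y show "order y p' \<le> 1" using less.prems(2)[rule_format, of y] ord[of y] by simp
    qed
    have r2: "\<forall>y. poly p' y = 0 \<longrightarrow> poly Q' y = 0"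
    proof (intro allI impI)
      fix y assume y: "poly p' y = 0"
      then have "y \<noteq> x" using px by auto
      have "poly p y = 0" using p' y by simp
      then have "poly Q y = 0" using less.prems(3) by blast
      then show "poly Q' y = 0" using Q' \<open>y \<noteq> x\<close> by simp
    qed
    have "p' dvd Q'" using less.hyps[OF deg \<open>p' \<noteq> 0\<close> o2 r2] .
    then have "[:-x,1:] * p' dvd [:-x,1:] * Q'" by (rule mult_dvd_mono[OF dvd_refl])
    then show ?thesis using p' Q' by simp
  qed
qed

lemma closed_form:
  fixes A :: "nat \<Rightarrow> 'c::alg_closed_field" and P :: "'c poly"
  assumes ann: "annihilates P A" and sq: "rsquarefree P"
  shows "\<exists>c. \<forall>N. A N = (\<Sum>\<alpha>\<in>{x. poly P x = 0}. c \<alpha> * \<alpha> ^ N)"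
proof -
  define R where "R = {x. poly P x = 0}"
  have "P \<noteq> 0" using sq by (simp add: rsquarefree_def)
  have finR: "finite R" unfolding R_def using poly_roots_finite[OF \<open>P \<noteq> 0\<close>] .
  have ordP: "\<forall>x. order x P \<le> 1" using sq unfolding rsquarefree_def by (metis le_refl zero_le_one)
  define L where "L \<alpha> = (\<Prod>\<beta>\<in>R-{\<alpha>}. smult (inverse (\<alpha> - \<beta>)) [:-\<beta>,1:])" for \<alpha>
  have pl: "poly (L \<alpha>) y = (if y = \<alpha> then 1 else 0)" if "\<alpha> \<in> R" "y \<in> R" for \<alpha> y
  proof (cases "y = \<alpha>")
    case True
    have "poly (L \<alpha>) y = (\<Prod>\<beta>\<in>R-{\<alpha>}. inverse (\<alpha> - \<beta>) * (y - \<beta>))"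
      by (simp add: L_def poly_prod algebra_simps)
    also have "\<dots> = (\<Prod>\<beta>\<in>R-{\<alpha>}. 1)"
      by (intro prod.cong refl) (use True in auto)
    finally show ?thesis using True by simp
  next
    case False
    have "poly (L \<alpha>) y = (\<Prod>\<beta>\<in>R-{\<alpha>}. inverse (\<alpha> - \<beta>) * (y - \<beta>))"
      by (simp add: L_def poly_prod algebra_simps)
    also have "\<dots> = 0"
      by (rule prod_zero) (use False that finR in auto)
    finally show ?thesis using False by simp
  qed
  define c where "c \<alpha> = shift_apply (L \<alpha>) A 0" for \<alpha>
  have "A N = (\<Sum>\<alpha>\<in>R. c \<alpha> * \<alpha> ^ N)" for N
  proof -
    define I where "I = (\<Sum>\<alpha>\<in>R. smult (\<alpha> ^ N) (L \<alpha>))"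
    have "P dvd (monom 1 N - I)"
    proof (rule sqf_dvd[OF \<open>P \<noteq> 0\<close> ordP], intro allI impI)
      fix y assume "poly P y = 0"
      then have y: "y \<in> R" by (simp add: R_def)
      have "poly I y = (\<Sum>\<alpha>\<in>R. \<alpha> ^ N * poly (L \<alpha>) y)"
        by (simp add: I_def poly_sum)
      also have "\<dots> = (\<Sum>\<alpha>\<in>R. if \<alpha> = y then y ^ N else 0)"
        by (intro sum.cong refl) (use y pl in auto)
      also have "\<dots> = y ^ N" using finR y by simp
      finally show "poly (monom 1 N - I) y = 0" by (simp add: poly_monom)
    qed
    then obtain W where W: "monom 1 N - I = P * W" unfolding dvd_def by blast
    have "A N = shift_apply (monom 1 N) A 0" by (simp add: shift_apply_monom)
    also have "\<dots> = shift_apply I A 0 + shift_apply (monom 1 N - I) A 0"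
      by (simp add: shift_apply_diff)
    also have "shift_apply (monom 1 N - I) A 0 = 0"
      unfolding W using shift_apply_mult[OF ann, of W] by (simp add: mult.commute)
    also have "shift_apply I A 0 = (\<Sum>\<alpha>\<in>R. c \<alpha> * \<alpha> ^ N)"
      by (simp add: I_def shift_apply_sum[OF finR] shift_apply_smult c_def mult.commute)
    finally show ?thesis by simp
  qed
  then show ?thesis unfolding R_def by blast
qed

lemma core:
  fixes a :: "nat \<Rightarrow> 'k::field"
  assumes ch: "CHAR('k) > 0" and rec: "is_recurrence a" and sim: "simple_rec a"
    and nd: "nondegenerate_rec a" and qd: "q = CHAR('k) ^ k"
    and z: "\<forall>i\<ge>1. a (M + T * ee q i) = 0"
  shows "a M = 0"
proof -
  define P where "P = map_poly to_ac (min_poly a)"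
  define A where "A n = to_ac (a n)" for n
  have degP: "degree P = degree (min_poly a)" unfolding P_def by (rule degree_map_poly) simp
  have annP: "annihilates P A"
  proof -
    have "shift_apply P A n = to_ac (shift_apply (min_poly a) a n)" for n
      unfolding shift_apply_def degP by (simp add: to_ac_sum P_def A_def coeff_map_poly)
    then show ?thesis using min_poly_props(2)[OF rec]
      by (simp add: annihilates_def fun_eq_iff)
  qed
  have sqP: "rsquarefree P" using sim unfolding simple_rec_def P_def .
  define R where "R = {x. poly P x = 0}"
  obtain c where c: "\<And>N. A N = (\<Sum>\<alpha>\<in>R. c \<alpha> * \<alpha> ^ N)"
    using closed_form[OF annP sqP] unfolding R_def by blast
  have "P \<noteq> 0" using sqP by (simp add: rsquarefree_def)
  have finR: "finite R" unfolding R_def using poly_roots_finite[OF \<open>P \<noteq> 0\<close>] .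
  have nz: "\<forall>x\<in>R. x \<noteq> 0" using nd unfolding nondegenerate_rec_def R_def P_def by blast
  have pc: "prime CHAR('k alg_closure)" using prime_CHAR_semidom[OF ch] by simp
  have qd': "q = CHAR('k alg_closure) ^ k" using qd by simp
  have "(\<Sum>\<alpha>\<in>R. c \<alpha> * \<alpha> ^ M) = 0"
  proof (rule frob_core[OF pc qd' finR, where \<beta> = "\<lambda>\<alpha>. \<alpha> ^ T"])
    show "\<forall>x\<in>R. x ^ T \<noteq> 0" using nz by simp
    show "\<forall>i\<ge>1. (\<Sum>x\<in>R. c x * x ^ M * (x ^ T) ^ ee q i) = 0"
    proof (intro allI impI)
      fix i :: nat assume "i \<ge> 1"
      have "(\<Sum>x\<in>R. c x * x ^ M * (x ^ T) ^ ee q i) = A (M + T * ee q i)"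
        by (simp add: c power_add power_mult mult.assoc)
      also have "\<dots> = 0" using z \<open>i \<ge> 1\<close> by (simp add: A_def)
      finally show "(\<Sum>x\<in>R. c x * x ^ M * (x ^ T) ^ ee q i) = 0" .
    qed
  qed
  then have "A M = 0" by (simp add: c)
  then show ?thesis by (simp add: A_def)
qed

lemma ee_geo: "(of_nat (ee q i) :: rat) * (of_nat q - 1) = of_nat q ^ i - 1"
  by (induction i) (simp_all add: algebra_simps)

lemma int_nonneg_nat: "(x::rat) \<in> \<int> \<Longrightarrow> 0 \<le> x \<Longrightarrow> \<exists>z::nat. x = of_nat z"
  by (metis Ints_cases of_int_of_nat_eq of_int_0_le_iff nat_0_le)

theorem lemma8p1:
  fixes a :: "nat \<Rightarrow> 'k::field" and q k m :: nat and r s :: rat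
  assumes "CHAR('k) > 0"
    and "is_recurrence a" and "simple_rec a" and "nondegenerate_rec a"
    and "k \<ge> 1" and "q = CHAR('k) ^ k"
    and "{r + s * of_nat q ^ n | n. n \<ge> m} \<subseteq> of_nat ` zero_set a"
  shows "{r + s * of_nat q ^ n | n. True} \<inter> \<nat> \<subseteq> of_nat ` zero_set a"
proof
  fix x assume "x \<in> {r + s * of_nat q ^ n | n. True} \<inter> \<nat>"
  then obtain n0 where x: "x = r + s * of_nat q ^ n0" and xN: "x \<in> \<nat>" by blast
  define Q where "Q = (of_nat q :: rat)"
  define N where "N j = r + s * Q ^ j" for j
  have hypN: "\<exists>z. a z = 0 \<and> N j = of_nat z" if "j \<ge> m" for j
  proof -
    have "N j \<in> of_nat ` zero_set a" using assms(7) that unfolding N_def Q_def by blast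
    then show ?thesis unfolding zero_set_def by auto
  qed
  have p2: "CHAR('k) \<ge> 2" using prime_CHAR_semidom[OF assms(1)] prime_ge_2_nat by blast
  have q2: "q \<ge> 2"
  proof -
    have "CHAR('k) ^ 1 \<le> CHAR('k) ^ k" by (rule power_increasing) (use assms(5) p2 in auto)
    then show ?thesis using p2 assms(6) by simp
  qed
  have Q1: "Q \<ge> 1" using q2 by (simp add: Q_def)
  have xN0: "x = N n0" by (simp add: x N_def Q_def)
  show "x \<in> of_nat ` zero_set a"
  proof (cases "n0 \<ge> m")
    case True
    then obtain z where "a z = 0" "N n0 = of_nat z" using hypN by blast
    then show ?thesis using xN0 unfolding zero_set_def by auto
  next
    case False
    have s0: "s \<ge> 0"
    proof (rule ccontr)
      assume "\<not> s \<ge> 0"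
      then have "0 < - s" by simp
      then obtain n :: nat where n: "r < of_nat n * (- s)" using ex_less_of_nat_mult by blast
      define j where "j = m + n"
      have "j < 2 ^ j" by simp
      also have "(2::nat) ^ j \<le> q ^ j" by (rule power_mono) (use q2 in auto)
      finally have "of_nat j \<le> Q ^ j" unfolding Q_def by (metis less_imp_le of_nat_le_iff of_nat_power)
      then have "s * Q ^ j \<le> s * of_nat j" using \<open>\<not> s \<ge> 0\<close> by (intro mult_left_mono_neg) auto
      moreover have "s * of_nat j \<le> s * of_nat n" using \<open>\<not> s \<ge> 0\<close> by (intro mult_left_mono_neg) (auto simp: j_def)
      ultimately have "N j < 0" using n unfolding N_def by (simp add: algebra_simps)
      moreover obtain z where "N j = of_nat z" using hypN[of j] by (auto simp: j_def)
      ultimately show False by simp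
    qed
    have mono: "N j \<le> N j'" if "j \<le> j'" for j j'
    proof -
      have "Q ^ j \<le> Q ^ j'" by (rule power_increasing) (use that Q1 in auto)
      then show ?thesis unfolding N_def using s0 by (simp add: mult_left_mono)
    qed
    have rint: "(Q - 1) * r \<in> \<int>"
    proof -
      obtain z1 where z1: "N m = of_nat z1" using hypN by blast
      obtain z2 where z2: "N (Suc m) = of_nat z2" using hypN[of "Suc m"] by auto
      have "(Q - 1) * r = Q * N m - N (Suc m)" by (simp add: N_def algebra_simps)
      also have "\<dots> \<in> \<int>" unfolding z1 z2 Q_def by simp
      finally show ?thesis .
    qed
    have Nint: "N j \<in> \<int>" if "n0 \<le> j" for j
      using that
    proof (induction j rule: dec_induct)
      case base
      then show ?case using xN xN0 Nats_subset_Ints by auto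
    next
      case (step j)
      have "N (Suc j) = Q * N j - (Q - 1) * r" by (simp add: N_def algebra_simps)
      also have "\<dots> \<in> \<int>" using step.IH rint by (simp add: Q_def)
      finally show ?case .
    qed
    have "\<forall>j. \<exists>z. n0 \<le> j \<longrightarrow> N j = of_nat z"
    proof
      fix j
      show "\<exists>z. n0 \<le> j \<longrightarrow> N j = of_nat z"
      proof (cases "n0 \<le> j")
        case True
        have "0 \<le> x" using xN by (auto elim: Nats_cases)
        then have "0 \<le> N j" using mono[OF True] xN0 by simp
        then show ?thesis using int_nonneg_nat[OF Nint[OF True]] by blast
      qed simp
    qed
    then obtain nN where nN: "\<And>j. n0 \<le> j \<Longrightarrow> N j = of_nat (nN j)" by metis
    have nm: "n0 \<le> m" using False by simp
    have zm: "a (nN j) = 0" if jm: "j \<ge> m" for j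
    proof -
      obtain z where z: "a z = 0" "N j = of_nat z" using hypN[OF jm] by blast
      have "N j = of_nat (nN j)" by (rule nN) (use jm nm in linarith)
      then have "nN j = z" using z(2) by simp
      then show ?thesis using z(1) by simp
    qed
    have stepl: "a (nN j) = 0" if j0: "n0 \<le> j" and up: "\<forall>j'>j. a (nN j') = 0" for j
    proof -
      define T where "T = nN (Suc j) - nN j"
      have le: "nN j \<le> nN (Suc j)"
        using mono[of j "Suc j"] nN[OF j0] nN[of "Suc j"] j0 by simp
      have eq: "nN j + T * ee q i = nN (j + i)" for i
      proof -
        have "(of_nat (nN j + T * ee q i) :: rat) = N j + (N (Suc j) - N j) * of_nat (ee q i)"
          using le nN[OF j0] nN[of "Suc j"] j0 by (simp add: T_def of_nat_diff)
        also have "\<dots> = r + s * Q ^ j + s * Q ^ j * (of_nat (ee q i) * (Q - 1))"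
          by (simp add: N_def algebra_simps)
        also have "\<dots> = N (j + i)"
          unfolding Q_def ee_geo by (simp add: N_def Q_def algebra_simps power_add)
        also have "\<dots> = of_nat (nN (j + i))" using nN j0 by simp
        finally show ?thesis by (simp only: of_nat_eq_iff)
      qed
      have "\<forall>i\<ge>1. a (nN j + T * ee q i) = 0"
      proof (intro allI impI)
        fix i :: nat assume "1 \<le> i"
        then have "j + i > j" by simp
        then show "a (nN j + T * ee q i) = 0" unfolding eq using up by blast
      qed
      then show ?thesis by (rule core[OF assms(1-4) assms(6)])
    qed
    have down: "\<forall>j. n0 \<le> j \<longrightarrow> m - j \<le> d \<longrightarrow> a (nN j) = 0" for d
    proof (induction d)
      case 0
      then show ?case using zm by simp
    next
      case (Suc d)
      show ?case
      proof (intro allI impI)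
        fix j assume j: "n0 \<le> j" "m - j \<le> Suc d"
        have "\<forall>j'>j. a (nN j') = 0"
        proof (intro allI impI)
          fix j' assume "j' > j"
          then have "n0 \<le> j'" "m - j' \<le> d" using j by linarith+
          then show "a (nN j') = 0" using Suc.IH by blast
        qed
        then show "a (nN j) = 0" using stepl j by blast
      qed
    qed
    have "a (nN n0) = 0" using down[of "m - n0"] by simp
    moreover have "x = of_nat (nN n0)" using xN0 nN by simp
    ultimately show ?thesis unfolding zero_set_def by blast
  qed
qed

end
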